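(* Let $\alpha \in [0,1)$ and $\mathbf{x} \in \Omega$ be such that $\mathcal{F}(\{\mathbf{x}\}, \alpha)$ is nonempty. Then the highest value $B(\mathbf{x})$ assigned to $\mathbf{x}$ by any valid bound $B$, denoted $B^*(\mathbf{x})$, satisfies $$B^*(\mathbf{x}) = \min\{E[F] : F \in \mathcal{F}(\{\mathbf{x}\}, \alpha)\}.$$
   Context: Fix integers $m \ge 2$, $n \ge 1$ and reals $S_{\min} < S_{\max}$; $S = \{S_0,\dots,S_{m-1}\}$ with $S_k = S_{\min} + k\frac{S_{\max}-S_{\min}}{m-1}$. $\mathcal{F}$ is the set of probability distributions on $S$, identified with the probability simplex in $\mathbb{R}^m$ with the Euclidean topology; $E[F]$ is the mean. $\Omega$ is the set of samples of size $n$ from $S$, identified with their sorted versions. For $F \in \mathcal{F}$, $\mathbf{X}$ denotes a sample of $n$ i.i.d. draws from $F$, and $P_F[\Omega']$ is the probability that (sorted) $\mathbf{X}$ lies in $\Omega' \subseteq \Omega$. $\mathcal{G}(\Omega',\alpha) = \{F : P_F[\Omega'] > \alpha\}$ and $\mathcal{F}(\Omega',\alpha)$ is its closure in $\mathcal{F}$. A bound is a function $B : \Omega \to \mathbb{R}$; it is valid (at level $1-\alpha$) if $P_F[B(\mathbf{X}) \le E[F]] \ge 1 - \alpha$ for every $F \in \mathcal{F}$. *)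

theory Defs
  imports "HOL-Analysis.Analysis"
begin

definition supp_pt :: "nat \<Rightarrow> real \<Rightarrow> real \<Rightarrow> nat \<Rightarrow> real" where
  "supp_pt m Smin Smax k = Smin + real k * (Smax - Smin) / (real m - 1)"

text \<open>Distributions on S: a distribution is given by its probability vector
  p 0, ..., p (m-1); coordinates k \<ge> m are fixed to 0 (so the set is a copy of
  the probability simplex in R^m, with the Euclidean = product topology).\<close>
definition dists :: "nat \<Rightarrow> (nat \<Rightarrow> real) set" where
  "dists m = {p. (\<forall>k. 0 \<le> p k) \<and> (\<forall>k\<ge>m. p k = 0) \<and> (\<Sum>k<m. p k) = 1}"

definition mean :: "nat \<Rightarrow> real \<Rightarrow> real \<Rightarrow> (nat \<Rightarrow> real) \<Rightarrow> real" where
  "mean m Smin Smax p = (\<Sum>k<m. p k * supp_pt m Smin Smax k)"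

text \<open>Samples of size n (identified with their sorted versions), encoded via
  the indices k of the support points S_k.\<close>
definition samples :: "nat \<Rightarrow> nat \<Rightarrow> nat list set" where
  "samples m n = {xs. length xs = n \<and> sorted xs \<and> set xs \<subseteq> {..<m}}"

text \<open>P_F[A]: probability that the sorted sample of n i.i.d. draws from p lies in A.\<close>
definition prob :: "nat \<Rightarrow> nat \<Rightarrow> (nat \<Rightarrow> real) \<Rightarrow> nat list set \<Rightarrow> real" where
  "prob m n p A = (\<Sum>w \<in> {w. length w = n \<and> set w \<subseteq> {..<m}}.
                      if sort w \<in> A then prod_list (map p w) else 0)"

definition Gset :: "nat \<Rightarrow> nat \<Rightarrow> nat list set \<Rightarrow> real \<Rightarrow> (nat \<Rightarrow> real) set" where
  "Gset m n A \<alpha> = {p \<in> dists m. prob m n p A > \<alpha>}"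

definition Fset :: "nat \<Rightarrow> nat \<Rightarrow> nat list set \<Rightarrow> real \<Rightarrow> (nat \<Rightarrow> real) set" where
  "Fset m n A \<alpha> = dists m \<inter> closure (Gset m n A \<alpha>)"

definition valid_bound :: "nat \<Rightarrow> nat \<Rightarrow> real \<Rightarrow> real \<Rightarrow> real \<Rightarrow> (nat list \<Rightarrow> real) \<Rightarrow> bool" where
  "valid_bound m n Smin Smax \<alpha> B =
     (\<forall>p \<in> dists m. prob m n p {w \<in> samples m n. B w \<le> mean m Smin Smax p} \<ge> 1 - \<alpha>)"

end

theory Submission
  imports Defs
begin

lemma coord_cont: "continuous_on S (\<lambda>x::nat\<Rightarrow>real. x i)"
  by (rule continuous_on_subset[OF continuous_on_product_coordinates]) simp

lemma mean_cont: "continuous_on S (mean m Smin Smax)"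
  unfolding mean_def
  by (intro continuous_intros coord_cont)

lemma dists_closed: "closed (dists m)"
proof -
  have "dists m = {p. \<forall>k. 0 \<le> p k} \<inter> {p. \<forall>k. k \<ge> m \<longrightarrow> p k = 0} \<inter> {p. (\<Sum>k<m. p k) = 1}"
    unfolding dists_def by auto
  moreover have "closed {p::nat\<Rightarrow>real. \<forall>k. 0 \<le> p k}"
    by (intro closed_Collect_all closed_Collect_le continuous_on_const coord_cont)
  moreover have "closed {p::nat\<Rightarrow>real. \<forall>k. k \<ge> m \<longrightarrow> p k = 0}"
    by (intro closed_Collect_all closed_Collect_imp closed_Collect_eq continuous_on_const coord_cont) auto
  moreover have "closed {p::nat\<Rightarrow>real. (\<Sum>k<m. p k) = 1}"
    by (intro closed_Collect_eq continuous_on_const continuous_intros coord_cont)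
  ultimately show ?thesis by auto
qed

lemma dists_compact: "compact (dists m)"
proof -
  have "compactin (product_topology (\<lambda>i. euclidean) UNIV) (PiE UNIV (\<lambda>i::nat. {0..1::real}))"
    by (subst compactin_PiE) auto
  then have c: "compact (PiE UNIV (\<lambda>i::nat. {0..1::real}))"
    by (simp add: euclidean_product_topology compactin_euclidean_iff)
  have "dists m \<subseteq> PiE UNIV (\<lambda>i::nat. {0..1::real})"
  proof
    fix p assume p: "p \<in> dists m"
    have "p k \<le> 1" for k
    proof (cases "k < m")
      case True
      have "p k \<le> (\<Sum>j<m. p j)"
        using p True by (intro member_le_sum) (auto simp: dists_def)
      then show ?thesis using p by (auto simp: dists_def)
    next
      case False then show ?thesis using p by (auto simp: dists_def)
    qed
    then show "p \<in> PiE UNIV (\<lambda>i::nat. {0..1::real})" using p by (auto simp: dists_def)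
  qed
  then have eq: "PiE UNIV (\<lambda>i::nat. {0..1::real}) \<inter> dists m = dists m" by (rule Int_absorb1)
  have "compact (PiE UNIV (\<lambda>i::nat. {0..1::real}) \<inter> dists m)"
    by (rule compact_Int_closed[OF c dists_closed])
  then show ?thesis by (simp only: eq)
qed

lemma words_sum:
  assumes "finite A"
  shows "(\<Sum>w\<in>{w. length w = n \<and> set w \<subseteq> A}. prod_list (map p w)) = (\<Sum>a\<in>A. p a :: real) ^ n"
proof (induction n)
  case 0
  have "{w. length w = 0 \<and> set w \<subseteq> A} = {[]}" by auto
  then show ?case by simp
next
  case (Suc n)
  have eq: "{w. length w = Suc n \<and> set w \<subseteq> A} = (\<lambda>(a,w). a # w) ` (A \<times> {w. length w = n \<and> set w \<subseteq> A})"
    by (auto simp: length_Suc_conv image_def)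
  have inj: "inj_on (\<lambda>(a,w). a # w) (A \<times> {w. length w = n \<and> set w \<subseteq> A})"
    by (auto simp: inj_on_def)
  have "(\<Sum>w\<in>{w. length w = Suc n \<and> set w \<subseteq> A}. prod_list (map p w))
      = (\<Sum>(a,w)\<in>A \<times> {w. length w = n \<and> set w \<subseteq> A}. p a * prod_list (map p w))"
    unfolding eq by (subst sum.reindex[OF inj]) (auto intro!: sum.cong)
  also have "\<dots> = (\<Sum>a\<in>A. p a) * (\<Sum>w\<in>{w. length w = n \<and> set w \<subseteq> A}. prod_list (map p w))"
    by (simp add: sum_product sum.cartesian_product)
  also have "\<dots> = (\<Sum>a\<in>A. p a) ^ Suc n" using Suc by simp
  finally show ?case .
qed

lemma words_finite: "finite {w::nat list. length w = n \<and> set w \<subseteq> {..<m}}"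
  using finite_lists_length_eq[of "{..<m}" n] by (simp add: conj_commute)

lemma prob_total:
  assumes "p \<in> dists m"
  shows "(\<Sum>w\<in>{w. length w = n \<and> set w \<subseteq> {..<m}}. prod_list (map p w)) = 1"
  using assms by (simp add: words_sum dists_def)

lemma prod_nonneg: "p \<in> dists m \<Longrightarrow> 0 \<le> prod_list (map p w)"
  by (induction w) (auto simp: dists_def)

lemma sort_in_samples: "length w = n \<Longrightarrow> set w \<subseteq> {..<m} \<Longrightarrow> sort w \<in> samples m n"
  by (auto simp: samples_def)

lemma prob_two:
  "prob m n p G + prob m n p {x} = (\<Sum>w \<in> {w. length w = n \<and> set w \<subseteq> {..<m}}.
      (if sort w \<in> G then prod_list (map p w) else 0) + (if sort w = x then prod_list (map p w) else 0))"
  unfolding prob_def by (simp add: sum.distrib)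

lemma probA:
  assumes "p \<in> dists m" "x \<notin> G"
  shows "prob m n p G + prob m n p {x} \<le> 1"
proof -
  have "prob m n p G + prob m n p {x} \<le> (\<Sum>w\<in>{w. length w = n \<and> set w \<subseteq> {..<m}}. prod_list (map p w))"
    unfolding prob_two
  proof (rule sum_mono)
    fix w
    have "0 \<le> prod_list (map p w)" by (rule prod_nonneg[OF assms(1)])
    then show "(if sort w \<in> G then prod_list (map p w) else 0) + (if sort w = x then prod_list (map p w) else 0)
          \<le> prod_list (map p w)" using assms(2) by (cases "sort w = x") simp_all
  qed
  then show ?thesis using prob_total[OF assms(1)] by simp
qed

lemma probB2:
  assumes "p \<in> dists m" "samples m n - {x} \<subseteq> G"
  shows "prob m n p G + prob m n p {x} \<ge> 1"
proof -
  have "prob m n p G + prob m n p {x} \<ge> (\<Sum>w\<in>{w. length w = n \<and> set w \<subseteq> {..<m}}. prod_list (map p w))"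
    unfolding prob_two
  proof (rule sum_mono)
    fix w assume w: "w \<in> {w. length w = n \<and> set w \<subseteq> {..<m}}"
    then have "sort w \<in> samples m n" using sort_in_samples by blast
    moreover have "0 \<le> prod_list (map p w)" by (rule prod_nonneg[OF assms(1)])
    ultimately show "prod_list (map p w) \<le> (if sort w \<in> G then prod_list (map p w) else 0) + (if sort w = x then prod_list (map p w) else 0)"
      using assms(2) by (cases "sort w = x") auto
  qed
  then show ?thesis using prob_total[OF assms(1)] by simp
qed

lemma probB1:
  assumes "p \<in> dists m" "samples m n \<subseteq> G"
  shows "prob m n p G \<ge> 1"
proof -
  have "prob m n p G \<ge> (\<Sum>w\<in>{w. length w = n \<and> set w \<subseteq> {..<m}}. prod_list (map p w))"
    unfolding prob_def
  proof (rule sum_mono)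
    fix w assume w: "w \<in> {w. length w = n \<and> set w \<subseteq> {..<m}}"
    then have "sort w \<in> samples m n" using sort_in_samples by blast
    then show "prod_list (map p w) \<le> (if sort w \<in> G then prod_list (map p w) else 0)"
      using assms(2) by auto
  qed
  then show ?thesis using prob_total[OF assms(1)] by simp
qed

lemma mean_ge:
  assumes "m \<ge> 2" "Smin < Smax" "p \<in> dists m"
  shows "Smin \<le> mean m Smin Smax p"
proof -
  have "Smin = (\<Sum>k<m. p k * Smin)" using assms(3) by (simp add: dists_def sum_distrib_right[symmetric])
  also have "\<dots> \<le> mean m Smin Smax p" unfolding mean_def
  proof (rule sum_mono)
    fix k assume "k \<in> {..<m}"
    have "real m - 1 > 0" using assms(1) by simp
    then have "Smin \<le> supp_pt m Smin Smax k" using assms(2) by (simp add: supp_pt_def)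
    then show "p k * Smin \<le> p k * supp_pt m Smin Smax k"
      using assms(3) by (intro mult_left_mono) (auto simp: dists_def)
  qed
  finally show ?thesis .
qed

theorem lemma6:
  fixes m n :: nat and Smin Smax \<alpha> :: real and x :: "nat list"
  assumes "m \<ge> 2" and "n \<ge> 1" and "Smin < Smax"
    and "0 \<le> \<alpha>" and "\<alpha> < 1"
    and "x \<in> samples m n"
    and "Fset m n {x} \<alpha> \<noteq> {}"
  shows "\<exists>F0 \<in> Fset m n {x} \<alpha>.
           (\<forall>F \<in> Fset m n {x} \<alpha>. mean m Smin Smax F0 \<le> mean m Smin Smax F) \<and>
           (\<exists>B. valid_bound m n Smin Smax \<alpha> B \<and> B x = mean m Smin Smax F0) \<and>
           (\<forall>B. valid_bound m n Smin Smax \<alpha> B \<longrightarrow> B x \<le> mean m Smin Smax F0)"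
proof -
  let ?G = "Gset m n {x} \<alpha>"
  let ?F = "Fset m n {x} \<alpha>"
  let ?E = "mean m Smin Smax"
  have "compact ?F" unfolding Fset_def
    by (rule compact_Int_closed[OF dists_compact closed_closure])
  then obtain F0 where F0: "F0 \<in> ?F" "\<forall>F\<in>?F. ?E F0 \<le> ?E F"
    using continuous_attains_inf[OF _ assms(7) mean_cont] by blast
  have GF: "?G \<subseteq> ?F" unfolding Fset_def using closure_subset[of ?G]
    by (auto simp: Gset_def)
  have part2: "valid_bound m n Smin Smax \<alpha> (\<lambda>w. if w = x then ?E F0 else Smin)"
    unfolding valid_bound_def
  proof
    fix p assume p: "p \<in> dists m"
    let ?Gd = "{w \<in> samples m n. (if w = x then ?E F0 else Smin) \<le> ?E p}"
    have sub: "samples m n - {x} \<subseteq> ?Gd" using mean_ge[OF assms(1) assms(3) p] by auto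
    show "prob m n p ?Gd \<ge> 1 - \<alpha>"
    proof (cases "?E F0 \<le> ?E p")
      case True
      then have "samples m n \<subseteq> ?Gd" using sub by auto
      then have "prob m n p ?Gd \<ge> 1" by (rule probB1[OF p])
      then show ?thesis using assms(4) by linarith
    next
      case False
      then have "p \<notin> ?G" using GF F0(2) by auto
      then have "prob m n p {x} \<le> \<alpha>" using p by (auto simp: Gset_def)
      then show ?thesis using probB2[OF p sub] by linarith
    qed
  qed
  have part3: "B x \<le> ?E F0" if vB: "valid_bound m n Smin Smax \<alpha> B" for B
  proof (rule ccontr)
    assume "\<not> B x \<le> ?E F0"
    then have lt: "?E F0 < B x" by simp
    have op: "open {p. ?E p < B x}"
      by (rule open_Collect_less[OF mean_cont continuous_on_const])
    have "F0 \<in> {p. ?E p < B x} \<inter> closure ?G" using F0(1) lt by (auto simp: Fset_def)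
    then have "{p. ?E p < B x} \<inter> ?G \<noteq> {}" using open_Int_closure_eq_empty[OF op, of ?G] by blast
    then obtain p where p: "p \<in> dists m" "prob m n p {x} > \<alpha>" "?E p < B x"
      by (auto simp: Gset_def)
    let ?Gd = "{w \<in> samples m n. B w \<le> ?E p}"
    have "x \<notin> ?Gd" using p(3) by auto
    then have "prob m n p ?Gd + prob m n p {x} \<le> 1" by (rule probA[OF p(1)])
    moreover have "prob m n p ?Gd \<ge> 1 - \<alpha>" using vB p(1) unfolding valid_bound_def by (rule bspec)
    ultimately show False using p(2) by linarith
  qed
  have ex: "\<exists>B. valid_bound m n Smin Smax \<alpha> B \<and> B x = ?E F0"
    by (rule exI[of _ "\<lambda>w. if w = x then ?E F0 else Smin"]) (simp add: part2)
  have all: "\<forall>B. valid_bound m n Smin Smax \<alpha> B \<longrightarrow> B x \<le> ?E F0"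
    using part3 by blast
  show ?thesis
  proof (rule bexI[where x=F0])
    show "F0 \<in> ?F" by (rule F0(1))
    show "(\<forall>F\<in>?F. ?E F0 \<le> ?E F) \<and>
           (\<exists>B. valid_bound m n Smin Smax \<alpha> B \<and> B x = ?E F0) \<and>
           (\<forall>B. valid_bound m n Smin Smax \<alpha> B \<longrightarrow> B x \<le> ?E F0)"
      by (rule conjI[OF F0(2) conjI[OF ex all]])
  qed
qed

end
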